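(* Let $x_1,\dots,x_H\in\mathbb{R}^d$, $\theta_a^\star\in\mathbb{R}^d$ for $a\in\mathcal{M}=\{1,\dots,N\}$, $\alpha>0$ and $\lambda_a>0$. For $S\subseteq\mathcal{M}$ let $\mu_t(a;S):=\langle\theta_a^\star,x_t\rangle-\alpha\lambda_a\mathbf{1}\{a\notin S\}$ and $$f(S):=\sum_{t=1}^H\Bigl[\max_{a\in\mathcal{M}}\mu_t(a;S)-\max_{a\in\mathcal{M}}\mu_t(a;\emptyset)\Bigr].$$ Then $f$ is monotone non-decreasing and submodular on subsets of $\mathcal{M}$. *)

theory Defs
  imports "HOL-Analysis.Analysis"
begin

definition mu_t :: "(nat \<Rightarrow> real ^ 'd) \<Rightarrow> (nat \<Rightarrow> real ^ 'd) \<Rightarrow> real \<Rightarrow> (nat \<Rightarrow> real)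
    \<Rightarrow> nat \<Rightarrow> nat \<Rightarrow> nat set \<Rightarrow> real" where
  "mu_t x \<theta> \<alpha> lam t a S = \<theta> a \<bullet> x t - \<alpha> * lam a * (if a \<notin> S then 1 else 0)"

definition f_obj :: "nat \<Rightarrow> nat \<Rightarrow> (nat \<Rightarrow> real ^ 'd) \<Rightarrow> (nat \<Rightarrow> real ^ 'd) \<Rightarrow> real
    \<Rightarrow> (nat \<Rightarrow> real) \<Rightarrow> nat set \<Rightarrow> real" where
  "f_obj N H x \<theta> \<alpha> lam S =
     (\<Sum>t=1..H. (MAX a\<in>{1..N}. mu_t x \<theta> \<alpha> lam t a S) - (MAX a\<in>{1..N}. mu_t x \<theta> \<alpha> lam t a {}))"

definition monotone_set_fun :: "'a set \<Rightarrow> ('a set \<Rightarrow> real) \<Rightarrow> bool" where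
  "monotone_set_fun M g \<longleftrightarrow> (\<forall>A B. A \<subseteq> B \<and> B \<subseteq> M \<longrightarrow> g A \<le> g B)"

definition submodular_set_fun :: "'a set \<Rightarrow> ('a set \<Rightarrow> real) \<Rightarrow> bool" where
  "submodular_set_fun M g \<longleftrightarrow>
     (\<forall>A B e. A \<subseteq> B \<and> B \<subseteq> M \<and> e \<in> M - B \<longrightarrow>
        g (insert e A) - g A \<ge> g (insert e B) - g B)"

end

theory Submission
  imports Defs
begin

lemma h_mono:
  assumes "N \<ge> 1" "\<alpha> > 0" "\<forall>a\<in>{1..N}. lam a > 0" "A \<subseteq> B"
  shows "(MAX a\<in>{1..N}. mu_t x \<theta> \<alpha> lam t a A) \<le> (MAX a\<in>{1..N}. mu_t x \<theta> \<alpha> lam t a B)"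
proof -
  have ne: "{1..N} \<noteq> {}" using assms(1) by auto
  have "\<forall>a\<in>{1..N}. mu_t x \<theta> \<alpha> lam t a A \<le> mu_t x \<theta> \<alpha> lam t a B"
  proof
    fix a assume a: "a \<in> {1..N}"
    then have "\<alpha> * lam a > 0" using assms by simp
    then show "mu_t x \<theta> \<alpha> lam t a A \<le> mu_t x \<theta> \<alpha> lam t a B"
      using assms(4) unfolding mu_t_def by auto
  qed
  moreover have "\<forall>a\<in>{1..N}. mu_t x \<theta> \<alpha> lam t a B \<le> (MAX a\<in>{1..N}. mu_t x \<theta> \<alpha> lam t a B)"
    by simp
  ultimately have "\<forall>a\<in>{1..N}. mu_t x \<theta> \<alpha> lam t a A \<le> (MAX a\<in>{1..N}. mu_t x \<theta> \<alpha> lam t a B)"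
    using order_trans by blast
  then show ?thesis using ne by (simp add: Max_le_iff)
qed

lemma h_insert:
  assumes "N \<ge> 1" "\<alpha> > 0" "\<forall>a\<in>{1..N}. lam a > 0" "e \<in> {1..N}"
  shows "(MAX a\<in>{1..N}. mu_t x \<theta> \<alpha> lam t a (insert e S))
     = max (MAX a\<in>{1..N}. mu_t x \<theta> \<alpha> lam t a S) (\<theta> e \<bullet> x t)"
proof (rule antisym)
  have ne: "{1..N} \<noteq> {}" using assms(1) by auto
  show "(MAX a\<in>{1..N}. mu_t x \<theta> \<alpha> lam t a (insert e S))
     \<le> max (MAX a\<in>{1..N}. mu_t x \<theta> \<alpha> lam t a S) (\<theta> e \<bullet> x t)"
  proof -
    have "\<forall>a\<in>{1..N}. mu_t x \<theta> \<alpha> lam t a (insert e S) \<le>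
          max (MAX a\<in>{1..N}. mu_t x \<theta> \<alpha> lam t a S) (\<theta> e \<bullet> x t)"
    proof
      fix a assume a: "a \<in> {1..N}"
      show "mu_t x \<theta> \<alpha> lam t a (insert e S) \<le>
          max (MAX a\<in>{1..N}. mu_t x \<theta> \<alpha> lam t a S) (\<theta> e \<bullet> x t)"
      proof (cases "a = e")
        case True then show ?thesis unfolding mu_t_def by simp
      next
        case False
        have "mu_t x \<theta> \<alpha> lam t a S \<le> (MAX a\<in>{1..N}. mu_t x \<theta> \<alpha> lam t a S)"
          using a by simp
        moreover have "mu_t x \<theta> \<alpha> lam t a (insert e S) = mu_t x \<theta> \<alpha> lam t a S"
          using False unfolding mu_t_def by simp
        ultimately show ?thesis by linarith
      qed
    qed
    then show ?thesis using ne by (simp add: Max_le_iff)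
  qed
  show "max (MAX a\<in>{1..N}. mu_t x \<theta> \<alpha> lam t a S) (\<theta> e \<bullet> x t)
     \<le> (MAX a\<in>{1..N}. mu_t x \<theta> \<alpha> lam t a (insert e S))"
  proof -
    have "(MAX a\<in>{1..N}. mu_t x \<theta> \<alpha> lam t a S) \<le> (MAX a\<in>{1..N}. mu_t x \<theta> \<alpha> lam t a (insert e S))"
      by (rule h_mono[OF assms(1-3)]) auto
    moreover have "\<theta> e \<bullet> x t \<le> (MAX a\<in>{1..N}. mu_t x \<theta> \<alpha> lam t a (insert e S))"
    proof -
      have "mu_t x \<theta> \<alpha> lam t e (insert e S) = \<theta> e \<bullet> x t" unfolding mu_t_def by simp
      moreover have "mu_t x \<theta> \<alpha> lam t e (insert e S) \<le> (MAX a\<in>{1..N}. mu_t x \<theta> \<alpha> lam t a (insert e S))"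
        using assms(4) by simp
      ultimately show ?thesis by simp
    qed
    ultimately show ?thesis by simp
  qed
qed

theorem lemmaC3:
  fixes N H :: nat and x \<theta> :: "nat \<Rightarrow> real ^ 'd" and \<alpha> :: real and lam :: "nat \<Rightarrow> real"
  assumes "N \<ge> 1"
    and "\<alpha> > 0"
    and "\<forall>a\<in>{1..N}. lam a > 0"
  shows "monotone_set_fun {1..N} (f_obj N H x \<theta> \<alpha> lam)
       \<and> submodular_set_fun {1..N} (f_obj N H x \<theta> \<alpha> lam)"
proof
  define h where "h = (\<lambda>t S. MAX a\<in>{1..N}. mu_t x \<theta> \<alpha> lam t a S)"
  have f: "f_obj N H x \<theta> \<alpha> lam S = (\<Sum>t=1..H. h t S - h t {})" for S
    unfolding f_obj_def h_def by simp
  have hm: "A \<subseteq> B \<Longrightarrow> h t A \<le> h t B" for t A B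
    unfolding h_def by (rule h_mono[OF assms])
  have hi: "e \<in> {1..N} \<Longrightarrow> h t (insert e S) = max (h t S) (\<theta> e \<bullet> x t)" for t e S
    unfolding h_def by (rule h_insert[OF assms])
  show "monotone_set_fun {1..N} (f_obj N H x \<theta> \<alpha> lam)"
    unfolding monotone_set_fun_def f
    by (auto intro!: sum_mono dest: hm)
  show "submodular_set_fun {1..N} (f_obj N H x \<theta> \<alpha> lam)"
    unfolding submodular_set_fun_def
  proof (intro allI impI)
    fix A B e assume H: "A \<subseteq> B \<and> B \<subseteq> {1..N} \<and> e \<in> {1..N} - B"
    have "f_obj N H x \<theta> \<alpha> lam (insert e A) - f_obj N H x \<theta> \<alpha> lam A
        = (\<Sum>t=1..H. h t (insert e A) - h t A)"
      unfolding f by (simp add: sum_subtractf[symmetric])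
    moreover have "f_obj N H x \<theta> \<alpha> lam (insert e B) - f_obj N H x \<theta> \<alpha> lam B
        = (\<Sum>t=1..H. h t (insert e B) - h t B)"
      unfolding f by (simp add: sum_subtractf[symmetric])
    moreover have "(\<Sum>t=1..H. h t (insert e B) - h t B) \<le> (\<Sum>t=1..H. h t (insert e A) - h t A)"
    proof (rule sum_mono)
      fix t
      have "h t A \<le> h t B" using H hm by blast
      moreover have "e \<in> {1..N}" using H by blast
      ultimately show "h t (insert e B) - h t B \<le> h t (insert e A) - h t A"
        using hi by (simp add: max_def)
    qed
    ultimately show "f_obj N H x \<theta> \<alpha> lam (insert e A) - f_obj N H x \<theta> \<alpha> lam A
        \<ge> f_obj N H x \<theta> \<alpha> lam (insert e B) - f_obj N H x \<theta> \<alpha> lam B" by linarith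
  qed
qed

end
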